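(* Let $OABC$ be a quadrilateral in the hyperbolic plane with right angles at $A$, $B$, $C$ and angle $\alpha\in(0,\pi/2)$ at $O$. Let $d$ be the length of $OA$, $L$ the length of $AB$, $\ell$ the length of $BC$, and let the length of $OC$ be $L+h$. Let $M$ be the point of the side $OC$ at hyperbolic distance $h$ from $O$ (equivalently, at distance $L$ from $C$). Place the quadrilateral in the Poincar\'e unit disc model with $O$ at the center of the disc, let $s$ be the Euclidean distance from $O$ to $A$ and $t$ the Euclidean distance from $O$ to $M$ (so that $d=\log\frac{1+s}{1-s}$ and $h=\log\frac{1+t}{1-t}$). Then \[ \tanh L=\frac{\cos\alpha}{\sin\alpha}\,\frac{1-s^2}{2s}\qquad\text{and}\qquad t=\frac{\cos\alpha}{\sin\alpha+1}\,s . \] *)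

theory Defs
  imports "HOL-Analysis.Analysis"
begin

text \<open>Poincare unit disc model of the hyperbolic plane (curvature -1).\<close>

definition in_disc :: "complex \<Rightarrow> bool" where
  "in_disc z \<longleftrightarrow> cmod z < 1"

definition hdist :: "complex \<Rightarrow> complex \<Rightarrow> real" where
  "hdist z w = 2 * artanh (cmod (z - w) / cmod (1 - cnj z * w))"

definition hseg :: "complex \<Rightarrow> complex \<Rightarrow> complex set" where
  "hseg X Y = {P. in_disc P \<and> hdist X P + hdist P Y = hdist X Y}"

definition to_origin :: "complex \<Rightarrow> complex \<Rightarrow> complex" where
  "to_origin V z = (z - V) / (1 - cnj V * z)"

text \<open>Hyperbolic angle at vertex V between the geodesics V X and V Y: after moving V to
  the origin by an isometry, geodesics through the origin are diameters, and the
  (conformal) angle is the Euclidean angle between the image points.\<close>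
definition hangle :: "complex \<Rightarrow> complex \<Rightarrow> complex \<Rightarrow> real" where
  "hangle V X Y = (let x = to_origin V X; y = to_origin V Y in
     arccos (Re (x * cnj y) / (cmod x * cmod y)))"

definition convex_quad :: "complex \<Rightarrow> complex \<Rightarrow> complex \<Rightarrow> complex \<Rightarrow> bool" where
  "convex_quad P Q R S \<longleftrightarrow> in_disc P \<and> in_disc Q \<and> in_disc R \<and> in_disc S \<and>
     distinct [P, Q, R, S] \<and> hseg P R \<inter> hseg Q S \<noteq> {}"

end

theory Submission
  imports Defs
begin


lemma tanh_artanh_real: fixes x :: real assumes "-1 < x" "x < 1" shows "tanh (artanh x) = x"
proof -
  have p: "(1 - x) / (1 + x) > 0" "(1 + x) / (1 - x) > 0" using assms by auto
  have "-2 * artanh x = - ln ((1 + x) / (1 - x))" by (simp add: artanh_def)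
  also have "\<dots> = ln ((1 - x) / (1 + x))" using p assms by (simp add: ln_div)
  finally have e: "exp (-2 * artanh x) = (1 - x) / (1 + x)" using p by simp
  show ?thesis using assms unfolding tanh_real_altdef e by (simp add: field_simps)
qed

lemma cosh_tanh_sq: fixes x :: real shows "cosh x ^ 2 * (1 - tanh x ^ 2) = 1"
proof -
  have c: "cosh x \<noteq> 0" by (metis cosh_real_pos less_irrefl)
  have "cosh x ^ 2 * (1 - tanh x ^ 2) = cosh x ^ 2 - sinh x ^ 2"
    unfolding tanh_def power_divide using c by (simp add: field_simps)
  then show ?thesis using cosh_square_eq[of x] by simp
qed

lemma tanh_double_real: fixes x :: real shows "tanh (2*x) = 2 * tanh x / (1 + tanh x ^ 2)"
  using tanh_add[of x x] by (simp add: power2_eq_square)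

lemma sinh_double_tanh: fixes x :: real shows "sinh (2*x) = 2 * tanh x / (1 - tanh x ^ 2)"
proof -
  have c: "cosh x \<noteq> 0" by (metis cosh_real_pos less_irrefl)
  have e: "1 - tanh x ^ 2 = 1 / cosh x ^ 2" using cosh_tanh_sq[of x] c by (simp add: field_simps)
  show ?thesis unfolding e sinh_double using c by (simp add: tanh_def field_simps power2_eq_square)
qed




lemma hangle_cos:
  assumes "hangle V X Y = a"
  shows "Re (to_origin V X * cnj (to_origin V Y)) = cmod (to_origin V X) * cmod (to_origin V Y) * cos a"
proof -
  define x where "x = to_origin V X"
  define y where "y = to_origin V Y"
  define r where "r = Re (x * cnj y) / (cmod x * cmod y)"
  have a: "a = arccos r" using assms by (simp add: hangle_def x_def y_def r_def Let_def)
  show ?thesis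
  proof (cases "x = 0 \<or> y = 0")
    case True then show ?thesis by (auto simp: x_def[symmetric] y_def[symmetric])
  next
    case False
    then have p: "cmod x * cmod y > 0" by simp
    have "\<bar>Re (x * cnj y)\<bar> \<le> cmod x * cmod y"
      using abs_Re_le_cmod[of "x * cnj y"] by (simp add: norm_mult)
    then have "-1 \<le> r" "r \<le> 1" using p by (auto simp: r_def divide_le_eq le_divide_eq abs_le_iff)
    then have "cos a = r" using a cos_arccos by simp
    then show ?thesis using p by (simp add: r_def x_def[symmetric] y_def[symmetric])
  qed
qed

lemma hangle_right:
  assumes "hangle V X Y = pi/2"
  shows "Re (to_origin V X * cnj (to_origin V Y)) = 0"
  using hangle_cos[OF assms] by simp

lemma re_quot_zero:
  assumes "Re ((p1 / q1) * cnj (p2 / q2)) = 0"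
  shows "Re (p1 * cnj p2 * cnj q1 * q2) = 0"
proof -
  have "(p1 / q1) * cnj (p2 / q2) = (p1 * cnj p2) / (q1 * cnj q2)" by (simp add: complex_cnj_divide)
  then have "Re ((p1 * cnj p2) * cnj (q1 * cnj q2)) = 0" using assms Re_complex_div_eq_0 by metis
  then show ?thesis by (simp add: mult.assoc mult.left_commute)
qed




lemma perp_poly:
  fixes v1 v2 w1 w2 z1 z2 :: real
  assumes "v1^2 + v2^2 + 1 = 2*(v1*z1 + v2*z2)" "w1^2 + w2^2 + 1 = 2*(w1*z1 + w2*z2)"
  shows "Re ((Complex w1 w2 - Complex v1 v2) * cnj (Complex v1 v2 - Complex z1 z2) *
     cnj (1 - cnj (Complex v1 v2) * Complex w1 w2)) = 0"
  using assms by simp algebra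

lemma perp:
  assumes "cmod V ^2 + 1 = 2 * Re (V * cnj Z)" "cmod W ^2 + 1 = 2 * Re (W * cnj Z)"
  shows "Re (to_origin V W * cnj (V - Z)) = 0"
proof -
  have "Re ((W - V) * cnj (V - Z) * cnj (1 - cnj V * W)) = 0"
    using perp_poly[of "Re V" "Im V" "Re Z" "Im Z" "Re W" "Im W"] assms
    by (simp add: cmod_power2)
  then have "Re (((W - V) * cnj (V - Z)) / (1 - cnj V * W)) = 0"
    using Re_complex_div_eq_0 by (metis)
  then show ?thesis unfolding to_origin_def by (simp add: mult.commute mult.left_commute)
qed

lemma twoD_poly:
  fixes x1 x2 y1 y2 u1 u2 v1 v2 :: real
  assumes "x1*u1 + x2*u2 = 0" "y1 * v1 + y2 * v2 = 0" "x1*y1+x2*y2 = 0"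
  shows "(x1^2+x2^2)*(y1^2+y2^2)*(u1 * v1 + u2 * v2) = 0"
  using assms by algebra

lemma twoD:
  assumes "Re (x * cnj u) = 0" "Re (y * cnj v) = 0" "Re (x * cnj y) = 0" "x \<noteq> 0" "y \<noteq> 0"
  shows "Re (u * cnj v) = 0"
proof -
  have "((Re x)^2+(Im x)^2)*((Re y)^2+(Im y)^2)*(Re u * Re v + Im u * Im v) = 0"
    using twoD_poly[of "Re x" "Re u" "Im x" "Im u" "Re y" "Re v" "Im y" "Im v"] assms by simp
  moreover have "(Re x)^2+(Im x)^2 \<noteq> 0" "(Re y)^2+(Im y)^2 \<noteq> 0" using assms(4,5)
    by (simp_all add: complex_eq_iff sum_power2_eq_zero_iff)
  ultimately show ?thesis by (simp del: sum_power2_eq_zero_iff)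
qed




lemma km_w:
  fixes k m :: real
  assumes "k > 0" "m > 0" "k^2 + m^2 = 1"
  shows "k = 2*(k/(1+m))/(1+(k/(1+m))^2)" "m = (1-(k/(1+m))^2)/(1+(k/(1+m))^2)"
    "0 < k/(1+m)" "k/(1+m) < 1"
proof -
  have m1: "1 + m > 0" using assms by simp
  have q: "(1+m)^2 + k^2 = 2*(1+m)" using assms(3) by (simp add: power2_eq_square algebra_simps)
  have e0: "1 + (k/(1+m))^2 = ((1+m)^2 + k^2)/(1+m)^2" using m1 by (simp add: add_divide_distrib power_divide)
  have e: "1 + (k/(1+m))^2 = 2/(1+m)" unfolding e0 q proof -
    have "1 + m \<noteq> 0" using m1 by simp
    then show "2 * (1 + m) / (1 + m)^2 = 2 / (1 + m)" unfolding power2_eq_square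
      by (rule nonzero_mult_divide_mult_cancel_right)
  qed
  show "k = 2*(k/(1+m))/(1+(k/(1+m))^2)" unfolding e using m1 by (simp add: field_simps)
  have q2: "(1+m)^2 - k^2 = 2*m*(1+m)" using assms(3) by (simp add: power2_eq_square algebra_simps)
  have e20: "1 - (k/(1+m))^2 = ((1+m)^2 - k^2)/(1+m)^2" using m1 by (simp add: diff_divide_distrib power_divide)
  have e2: "1 - (k/(1+m))^2 = 2*m/(1+m)" unfolding e20 q2 using m1 by (simp add: power2_eq_square)
  show "m = (1-(k/(1+m))^2)/(1+(k/(1+m))^2)" unfolding e e2 using m1 by simp
  show "0 < k/(1+m)" using assms m1 by simp
  have "k < 1 + m"
  proof -
    have "k^2 < 1" using assms by (smt (verit) zero_less_power2)
    then have "k < 1" using assms(1) by (smt (verit) one_le_power)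
    then show ?thesis using assms by simp
  qed
  then show "k/(1+m) < 1" using m1 by simp
qed

lemma one_minus_sq_div: fixes x y :: real assumes "y \<noteq> 0" shows "1 - (x/y)^2 = (y^2 - x^2)/y^2"
  using assms by (simp add: power_divide diff_divide_distrib)

lemma Ts_aux: fixes w s a b :: real assumes "a \<noteq> 0" "b \<noteq> 0" "s \<noteq> 0"
  shows "2 * w / b * (1 - s^2) / (2 * s * (a / b)) = (w * (1 - s^2)) / (s * a)"
  using assms by (simp add: field_simps)

lemma Tcs_aux: fixes w s b :: real assumes "b \<noteq> 0" "s \<noteq> 0"
  shows "2 * w / b * (1 + s^2) / (2 * s) = (w * (1 + s^2)) / (s * b)"
  using assms by (simp add: field_simps)

lemma d_aux: fixes w s a b :: real assumes "a \<noteq> 0" "b \<noteq> 0" "s \<noteq> 0"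
  shows "(w * (1 + s^2)) / (s * b) - (w * (1 - s^2)) / (s * a) = w * ((1 + s^2) * a - (1 - s^2) * b) / (s * a * b)"
  using assms by (simp add: field_simps)

lemma p_aux: fixes w s a b c R :: real assumes "a \<noteq> 0" "b \<noteq> 0" "s \<noteq> 0"
  shows "s^2 * a * b / R * (2 * w * c / (s * a * b)) = 2 * s * w * c / R"
  using assms by (simp add: field_simps power2_eq_square)

lemma key_real:
  fixes s w P T Tc :: real
  assumes s: "0 < s" "s < 1" and w: "0 < w" "w < 1"
    and Td: "T = 2 * w / (1 + w^2) * (1 - s^2) / (2 * s * ((1 - w^2) / (1 + w^2)))"
    and Tcd: "Tc = 2 * w / (1 + w^2) * (1 + s^2) / (2 * s)"
    and T1: "1 - T^2 > 0"
    and P: "P > 0" "P^2 * (1 - Tc^2) * (1 - T^2) = 1"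
  shows "P * (Tc - T) = 2 * (s * w) / (1 - (s * w)^2)"
proof -
  define R where "R = (s^2 - w^2) * (1 - s^2 * w^2)"
  have w2a: "w^2 < 1" using w by (simp add: power_less_one_iff)
  have w2: "1 - w^2 > 0" "1 + w^2 > 0" using w2a by (auto simp: add_pos_nonneg)
  have sw1: "s * w < 1" using s w by (smt (verit) mult_less_cancel_right1)
  have sw: "1 - (s * w)^2 > 0" using sw1 s w by (simp add: power_less_one_iff)
  have Ts: "T = (w * (1 - s^2)) / (s * (1 - w^2))" unfolding Td by (rule Ts_aux) (use s w2 in auto)
  have Tcs: "Tc = (w * (1 + s^2)) / (s * (1 + w^2))" unfolding Tcd by (rule Tcs_aux) (use s w2 in auto)
  have a: "1 - T^2 = R / (s * (1 - w^2))^2"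
  proof -
    have "1 - T^2 = ((s * (1 - w^2))^2 - (w * (1 - s^2))^2) / (s * (1 - w^2))^2"
      unfolding Ts by (rule one_minus_sq_div) (use s w2 in simp)
    also have "(s * (1 - w^2))^2 - (w * (1 - s^2))^2 = R" unfolding R_def by algebra
    finally show ?thesis .
  qed
  have b: "1 - Tc^2 = R / (s * (1 + w^2))^2"
  proof -
    have "1 - Tc^2 = ((s * (1 + w^2))^2 - (w * (1 + s^2))^2) / (s * (1 + w^2))^2"
      unfolding Tcs by (rule one_minus_sq_div) (use s w2 in simp)
    also have "(s * (1 + w^2))^2 - (w * (1 + s^2))^2 = R" unfolding R_def by algebra
    finally show ?thesis .
  qed
  have Rp: "R > 0" using T1 unfolding a using s w2 by (simp add: zero_less_divide_iff)
  define Q where "Q = s^2 * (1 - w^2) * (1 + w^2)"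
  have Qp: "Q > 0" unfolding Q_def using s w2 by simp
  have "P^2 * (R / (s * (1 + w^2))^2) * (R / (s * (1 - w^2))^2) = 1" using P(2) unfolding a b .
  moreover have X: "(s * (1 + w^2))^2 \<noteq> 0" "(s * (1 - w^2))^2 \<noteq> 0" using s w2 by auto
  ultimately have "P^2 * R^2 = (s * (1 + w^2))^2 * (s * (1 - w^2))^2"
    by (simp add: field_simps power2_eq_square)
  then have "(P * R)^2 = Q^2" unfolding Q_def by (simp add: power_mult_distrib)
  then have "P * R = Q" using P(1) Rp Qp by (simp add: power2_eq_iff_nonneg)
  then have Pe: "P = Q / R" using Rp by (simp add: field_simps)
  have d: "Tc - T = 2 * w * (s^2 - w^2) / (s * (1 - w^2) * (1 + w^2))"
  proof -
    have "Tc - T = w * ((1 + s^2) * (1 - w^2) - (1 - s^2) * (1 + w^2)) / (s * (1 - w^2) * (1 + w^2))"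
      unfolding Ts Tcs by (rule d_aux) (use s w2 in auto)
    also have "(1 + s^2) * (1 - w^2) - (1 - s^2) * (1 + w^2) = 2 * (s^2 - w^2)" by algebra
    finally show ?thesis by simp
  qed
  have "P * (Tc - T) = 2 * s * w * (s^2 - w^2) / R"
    unfolding Pe d Q_def by (rule p_aux) (use s w2 in auto)
  also have "\<dots> = 2 * (s * w) / (1 - (s * w)^2)"
    unfolding R_def using s w2 sw Rp unfolding R_def
    by (simp add: field_simps power_mult_distrib)
  finally show ?thesis .
qed




lemma E1_lemma:
  assumes "Re ((0 - A) * cnj (B - A) * cnj (1 - cnj A * 0) * (1 - cnj A * B)) = 0"
  shows "Re (B * cnj A) * (1 + (cmod A)^2) = (cmod A)^2 * (1 + (cmod B)^2)"
  using assms unfolding cmod_power2 by simp algebra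

lemma E2_lemma:
  assumes "Re ((B - C) * cnj (0 - C) * cnj (1 - cnj C * B) * (1 - cnj C * 0)) = 0"
  shows "Re (B * cnj C) * (1 + (cmod C)^2) = (cmod C)^2 * (1 + (cmod B)^2)"
  using assms unfolding cmod_power2 by simp algebra

lemma I1: "(cmod A)^2 * Re (B * cnj C) = Re (B * cnj A) * Re (A * cnj C) - Im (B * cnj A) * Im (A * cnj C)"
  unfolding cmod_power2 by simp algebra

lemma I2: "(cmod A)^2 * (cmod B)^2 = (Re (B * cnj A))^2 + (Im (B * cnj A))^2"
  unfolding cmod_power2 by simp algebra

lemma I3: "(cmod A)^2 * (cmod C)^2 = (Re (A * cnj C))^2 + (Im (A * cnj C))^2"
  unfolding cmod_power2 by simp algebra

lemma I4: "(cmod (1 - cnj A * B))^2 - (cmod (A - B))^2 = (1 - (cmod A)^2) * (1 - (cmod B)^2)"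
  unfolding cmod_power2 by simp algebra

lemma I5: "(cmod (A - B))^2 = (cmod A)^2 - 2 * Re (B * cnj A) + (cmod B)^2"
  unfolding cmod_power2 by simp algebra

lemma I6: "(cmod (1 - cnj A * B))^2 = 1 - 2 * Re (B * cnj A) + (cmod A)^2 * (cmod B)^2"
  unfolding cmod_power2 by simp algebra

lemma I7: "Re ((B - Z1) * cnj (B - Z2)) = (cmod B)^2 - Re (B * cnj Z1) - Re (B * cnj Z2) + Re (Z1 * cnj Z2)"
  unfolding cmod_power2 by simp algebra

lemma to_origin_nz: assumes "cmod V < 1" "cmod W < 1" "V \<noteq> W" shows "to_origin V W \<noteq> 0"
proof -
  have "cmod V * cmod W \<le> cmod W"
    by (rule mult_left_le_one_le) (use assms in auto)
  then have "cmod (cnj V * W) < 1" using assms by (simp add: norm_mult)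
  then have "1 - cnj V * W \<noteq> 0" by auto
  then show ?thesis using assms unfolding to_origin_def by simp
qed


lemma Re_scale2: "Re ((A * of_real r1) * cnj (C * of_real r2)) = Re (A * cnj C) * r1 * r2"
  by (simp add: algebra_simps)

lemma key_real2:
  fixes s k m P T Tc :: real
  assumes s: "0 < s" "s < 1" and km: "k > 0" "m > 0" "k^2 + m^2 = 1"
    and Td: "T = k / m * ((1 - s^2) / (2 * s))"
    and Tcd: "Tc = k * (1 + s^2) / (2 * s)"
    and T1: "1 - T^2 > 0"
    and P: "P > 0" "P^2 * (1 - Tc^2) * (1 - T^2) = 1"
  shows "P * (Tc - T) = 2 * (s * (k / (1 + m))) / (1 - (s * (k / (1 + m)))^2)"
proof -
  define w where "w = k / (1 + m)"
  have kw: "k = 2 * w / (1 + w^2)" and mw: "m = (1 - w^2) / (1 + w^2)" and w: "0 < w" "w < 1"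
    using km_w[OF km] unfolding w_def by auto
  have Td': "T = 2 * w / (1 + w^2) * (1 - s^2) / (2 * s * ((1 - w^2) / (1 + w^2)))"
    unfolding Td unfolding kw[symmetric] mw[symmetric] by simp
  have Tcd': "Tc = 2 * w / (1 + w^2) * (1 + s^2) / (2 * s)"
    unfolding Tcd kw[symmetric] by simp
  show ?thesis unfolding w_def[symmetric] by (rule key_real[OF s w Td' Tcd' T1 P])
qed

theorem mainTheorem1:
  fixes A B C M :: complex and \<alpha> L l d h s t :: real
  assumes quad: "convex_quad 0 A B C"
    and angA: "hangle A 0 B = pi / 2"
    and angB: "hangle B A C = pi / 2"
    and angC: "hangle C B 0 = pi / 2"
    and angO: "hangle 0 A C = \<alpha>"
    and alpha: "0 < \<alpha>" "\<alpha> < pi / 2"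
    and d_def: "d = hdist 0 A"
    and L_def: "L = hdist A B"
    and l_def: "l = hdist B C"
    and h_def: "hdist 0 C = L + h"
    and M_on: "M \<in> hseg 0 C"
    and M_dist: "hdist 0 M = h"
    and s_def: "s = cmod A"
    and t_def: "t = cmod M"
  shows "tanh L = cos \<alpha> / sin \<alpha> * ((1 - s^2) / (2 * s))
         \<and> t = cos \<alpha> / (sin \<alpha> + 1) * s"
proof -
  have dA: "cmod A < 1" and dB: "cmod B < 1" and dC: "cmod C < 1"
    and A0: "A \<noteq> 0" and B0: "B \<noteq> 0" and C0: "C \<noteq> 0"
    and AB: "A \<noteq> B" and AC: "A \<noteq> C" and BC: "B \<noteq> C"
    using quad unfolding convex_quad_def in_disc_def by auto
  define c where "c = cmod C"
  define k where "k = cos \<alpha>"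
  define m where "m = sin \<alpha>"
  have s: "0 < s" "s < 1" using s_def dA A0 by auto
  have c: "0 < c" "c < 1" using c_def dC C0 by auto
  have k: "k > 0" unfolding k_def using alpha by (simp add: cos_gt_zero)
  have m: "m > 0" unfolding m_def using alpha by (simp add: sin_gt_zero)
  have km: "k^2 + m^2 = 1" unfolding k_def m_def by simp
  have O: "Re (A * cnj C) = s * c * k"
    using hangle_cos[OF angO] unfolding to_origin_def s_def c_def k_def by simp
  have E1: "Re (B * cnj A) * (1 + s^2) = s^2 * (1 + (cmod B)^2)"
    using E1_lemma[OF re_quot_zero[OF hangle_right[OF angA, unfolded to_origin_def]]] s_def by simp
  have E2: "Re (B * cnj C) * (1 + c^2) = c^2 * (1 + (cmod B)^2)"
    using E2_lemma[OF re_quot_zero[OF hangle_right[OF angC, unfolded to_origin_def]]] c_def by simp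
  define Z1 where "Z1 = A * of_real ((1 + s^2) / (2 * s^2))"
  define Z2 where "Z2 = C * of_real ((1 + c^2) / (2 * c^2))"
  have ReAA: "Re (A * cnj A) = s^2" unfolding s_def cmod_power2 by (simp add: power2_eq_square)
  have ReCC: "Re (C * cnj C) = c^2" unfolding c_def cmod_power2 by (simp add: power2_eq_square)
  have BZ1: "Re (B * cnj Z1) = Re (B * cnj A) * ((1 + s^2) / (2 * s^2))" unfolding Z1_def by (simp add: algebra_simps)
  have BZ2: "Re (B * cnj Z2) = Re (B * cnj C) * ((1 + c^2) / (2 * c^2))" unfolding Z2_def by (simp add: algebra_simps)
  have circB1: "(cmod B)^2 + 1 = 2 * Re (B * cnj Z1)" unfolding BZ1 using E1 s
    by (simp add: field_simps)
  have circB2: "(cmod B)^2 + 1 = 2 * Re (B * cnj Z2)" unfolding BZ2 using E2 c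
    by (simp add: field_simps)
  have AZ1: "Re (A * cnj Z1) = Re (A * cnj A) * ((1 + s^2) / (2 * s^2))" unfolding Z1_def by (simp add: algebra_simps)
  have CZ2: "Re (C * cnj Z2) = Re (C * cnj C) * ((1 + c^2) / (2 * c^2))" unfolding Z2_def by (simp add: algebra_simps)
  have circA: "(cmod A)^2 + 1 = 2 * Re (A * cnj Z1)" unfolding AZ1 ReAA s_def[symmetric] using s
    by (simp add: field_simps)
  have circC: "(cmod C)^2 + 1 = 2 * Re (C * cnj Z2)" unfolding CZ2 ReCC c_def[symmetric] using c
    by (simp add: field_simps)
  have p1: "Re (to_origin B A * cnj (B - Z1)) = 0" by (rule perp[OF circB1 circA])
  have p2: "Re (to_origin B C * cnj (B - Z2)) = 0" by (rule perp[OF circB2 circC])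
  have orth: "Re ((B - Z1) * cnj (B - Z2)) = 0"
    by (rule twoD[OF p1 p2 hangle_right[OF angB]])
       (use to_origin_nz dA dB dC AB BC in auto)
  have Z12: "Re (Z1 * cnj Z2) = 1" using orth unfolding I7 using circB1 circB2 by simp
  have ex: "Re (Z1 * cnj Z2) = Re (A * cnj C) * ((1 + s^2) / (2 * s^2)) * ((1 + c^2) / (2 * c^2))"
    unfolding Z1_def Z2_def by (rule Re_scale2)
  have "s * c * k * ((1 + s^2) / (2 * s^2)) * ((1 + c^2) / (2 * c^2)) = 1"
    using Z12 unfolding ex O .
  then have "(s * c) * (k * (1 + s^2) * (1 + c^2)) = (s * c) * (4 * s * c)" using s c
    by (simp add: field_simps power2_eq_square)
  then have KEY1: "k * (1 + s^2) * (1 + c^2) = 4 * s * c" using s c by simp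
  define g where "g = Re (B * cnj A)"
  define hB where "hB = Im (B * cnj A)"
  define e where "e = Im (A * cnj C)"
  define \<rho> where "\<rho> = Re (B * cnj C)"
  define Bs where "Bs = (cmod B)^2"
  have i1: "s^2 * \<rho> = g * (s * c * k) - hB * e"
    using I1[of A B C] unfolding s_def[symmetric] O g_def hB_def e_def \<rho>_def .
  have i2: "s^2 * Bs = g^2 + hB^2"
    using I2[of A B] unfolding s_def[symmetric] g_def hB_def Bs_def .
  have i3: "s^2 * c^2 = (s * c * k)^2 + e^2"
    using I3[of A C] unfolding s_def[symmetric] c_def[symmetric] O e_def .
  have e2: "e^2 = s^2 * c^2 * m^2" using i3 km by algebra
  have E1': "g * (1+s^2) = s^2 * (1+Bs)" using E1 unfolding g_def Bs_def .
  have E2': "\<rho> * (1+c^2) = c^2 * (1+Bs)" using E2 unfolding \<rho>_def Bs_def .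
  have K2: "g * (1 + s^2) * c^2 = \<rho> * (1 + c^2) * s^2" using E1' E2' by algebra
  have "c * (g * k * (1+s^2)^2 * c) = c * (4 * s^3 * \<rho>)" using KEY1 K2 by algebra
  then have st1: "g * k * (1+s^2)^2 * c = 4 * s^3 * \<rho>" using c by simp
  have st2: "4 * s * hB * e = - g * c * k * (1 - s^2)^2" using st1 i1 by algebra
  have "c^2 * (16 * s^4 * hB^2 * m^2) = c^2 * (g^2 * k^2 * (1 - s^2)^4)" using st2 e2 by algebra
  then have st3: "16 * s^4 * hB^2 * m^2 = g^2 * k^2 * (1 - s^2)^4" using c by simp
  define a where "a = cmod (A - B)"
  define b where "b = cmod (1 - cnj A * B)"
  define T where "T = k / m * ((1 - s^2) / (2 * s))"
  have Na: "a^2 = s^2 - 2 * g + Bs" using I5[of A B] unfolding a_def s_def g_def Bs_def .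
  have Db: "b^2 = 1 - 2 * g + s^2 * Bs" using I6[of A B] unfolding b_def s_def g_def Bs_def .
  have ab: "b^2 - a^2 = (1-s^2) * (1-Bs)" using I4[of A B] unfolding a_def b_def s_def Bs_def .
  have Bs1: "Bs < 1" unfolding Bs_def using dB by (simp add: power_less_one_iff)
  have s21: "s^2 < 1" using s by (simp add: power_less_one_iff)
  have "b^2 - a^2 > 0" unfolding ab using Bs1 s21 by simp
  then have a_lt_b: "a < b" using a_def b_def by (smt (verit) power_mono norm_ge_zero)
  have a0: "a \<ge> 0" unfolding a_def by simp
  have b0: "b > 0" using a_lt_b a0 by simp
  have nd: "s^2 * (a^2 * b^2) = (1-s^2)^2 * hB^2" using Na Db E1' i2 by algebra
  have npd: "s^2 * (a^2 + b^2) = (1-s^2)^2 * g" using Na Db E1' i2 by algebra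
  have Tm: "T * (2 * s * m) = k * (1-s^2)" unfolding T_def using s m by (simp add: field_simps)
  have T0: "T \<ge> 0" unfolding T_def using s21 k m s by simp
  have "4 * s^6 * m^2 * (2 * a * b)^2 = 4 * s^6 * m^2 * (T * (a^2+b^2))^2" using nd npd st3 Tm by algebra
  then have "(2 * a * b)^2 = (T * (a^2+b^2))^2" using s m by simp
  then have abT: "2 * a * b = T * (a^2+b^2)" using a0 b0 T0 by (simp add: power2_eq_iff_nonneg)
  have Ld: "L = 2 * artanh (a / b)" unfolding L_def hdist_def a_def b_def ..
  have abnn: "a/b \<ge> 0" using a0 b0 by simp
  have ab1: "-1 < a/b" "a/b < 1" using abnn b0 a_lt_b by auto
  have tL: "tanh L = T"
  proof -
    have "tanh L = 2 * (a/b) / (1 + (a/b)^2)" unfolding Ld tanh_double_real tanh_artanh_real[OF ab1] ..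
    also have "\<dots> = 2 * a * b / (a^2+b^2)" using b0 by (simp add: field_simps power2_eq_square)
    also have "\<dots> = T" using abT b0 by (simp add: field_simps add_pos_nonneg)
    finally show ?thesis .
  qed
  have goal1: "tanh L = cos \<alpha> / sin \<alpha> * ((1 - s^2) / (2 * s))" unfolding tL T_def k_def m_def ..
  define OC where "OC = hdist 0 C"
  define Tc where "Tc = k * (1 + s^2) / (2 * s)"
  have OCd: "OC = 2 * artanh c" unfolding OC_def hdist_def c_def by simp
  have tOC: "tanh OC = Tc"
  proof -
    have c1: "-1 < c" "c < 1" using c by auto
    have t2: "tanh OC = 2 * c / (1 + c^2)" unfolding OCd tanh_double_real tanh_artanh_real[OF c1] ..
    have q: "2 * c * (2 * s) = k * (1 + s^2) * (1 + c^2)" using KEY1 by algebra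
    have c2: "0 \<le> c^2" by simp
    have nz: "1 + c^2 \<noteq> 0" "2 * s \<noteq> 0" using s c2 by linarith+
    have "2 * c / (1 + c^2) = Tc" unfolding Tc_def frac_eq_eq[OF nz] by (rule q)
    then show ?thesis using t2 by simp
  qed
  define X where "X = cosh OC"
  define Y where "Y = cosh L"
  have X0: "X > 0" "X \<noteq> 0" unfolding X_def by auto
  have Y0: "Y > 0" "Y \<noteq> 0" unfolding Y_def by auto
  have XT: "X^2 * (1 - Tc^2) = 1" unfolding X_def tOC[symmetric] by (rule cosh_tanh_sq)
  have YT: "Y^2 * (1 - T^2) = 1" unfolding Y_def tL[symmetric] by (rule cosh_tanh_sq)
  have T1: "1 - T^2 > 0"
  proof (rule ccontr)
    assume "\<not> 1 - T^2 > 0"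
    then have "Y^2 * (1 - T^2) \<le> 0" by (simp add: mult_nonneg_nonpos)
    then show False using YT by simp
  qed
  have PP: "(X * Y)^2 * (1 - Tc^2) * (1 - T^2) = 1"
    using XT YT by algebra
  have kr: "(X * Y) * (Tc - T) = 2 * (s * (k / (1 + m))) / (1 - (s * (k / (1 + m)))^2)"
    by (rule key_real2[OF s k m km T_def Tc_def T1 _ PP]) (use X0 Y0 in simp)
  have sOC: "sinh OC = Tc * X" unfolding X_def tOC[symmetric] tanh_def using X0(2)[unfolded X_def] by simp
  have sL: "sinh L = T * Y" unfolding Y_def tL[symmetric] tanh_def using Y0(2)[unfolded Y_def] by simp
  define w where "w = k / (1 + m)"
  have w: "0 < w" "w < 1" using km_w[OF k m km] unfolding w_def by auto
  have swa: "s * w < s" using mult_strict_left_mono[of w 1 s] s w by simp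
  have swb: "0 < s * w" using s w by simp
  have sw1: "-1 < s * w" "s * w < 1" using swa swb s by linarith+
  have kr': "(X * Y) * (Tc - T) = 2 * (s * w) / (1 - (s * w)^2)" using kr unfolding w_def .
  have "sinh (OC - L) = (X * Y) * (Tc - T)" unfolding sinh_diff sOC sL X_def Y_def by (simp add: algebra_simps)
  also have "\<dots> = sinh (2 * artanh (s * w))"
    unfolding kr' sinh_double_tanh tanh_artanh_real[OF sw1] ..
  finally have "OC - L = 2 * artanh (s * w)" by simp
  then have hh: "h = 2 * artanh (s * w)" using h_def unfolding OC_def by simp
  have Mdisc: "cmod M < 1" using M_on unfolding hseg_def in_disc_def by simp
  have t0: "0 \<le> t" using t_def by simp
  have t1: "-1 < t" "t < 1" using Mdisc t_def t0 by linarith+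
  have "h = 2 * artanh t" using M_dist unfolding hdist_def t_def by simp
  then have "artanh t = artanh (s * w)" using hh by simp
  then have "tanh (artanh t) = tanh (artanh (s * w))" by simp
  then have "t = s * w" unfolding tanh_artanh_real[OF t1] tanh_artanh_real[OF sw1] .
  then have goal2: "t = cos \<alpha> / (sin \<alpha> + 1) * s" unfolding w_def k_def m_def by (simp add: add.commute)
  show ?thesis using goal1 goal2 by simp
qed

end
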